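(* Assume the standing assumptions, and let $p_0:(0,\infty)\to(0,\infty)$ be the inverse function of $\mathcal L$, i.e. $\mathcal L(p_0(z))=z$. Then $p_0$ is strictly superadditive: $$p_0(x+y)>p_0(x)+p_0(y)\qquad\text{for all } x,y>0.$$ In particular, $p_0(n\beta)>\sum_{j=1}^k p_0(m_j\beta)$ whenever $\beta>0$, $k\ge2$, $m_1,\dots,m_k\in\mathbb N$ and $n=m_1+\dots+m_k$.
   Context: Standing assumptions: $k:(0,\infty)\to[0,\infty)$ is locally integrable, its Laplace transform $\mathcal K(p)=\int_0^\infty e^{-pt}k(t)\,dt$ is finite for $p>0$ and is a Stieltjes function, and $\mathcal L(p)=p\mathcal K(p)$. Moreover $\mathcal K(p)\to\infty$ as $p\to0^+$, $\mathcal K(p)\to0$ as $p\to\infty$, $\mathcal L(p)\to0$ as $p\to0^+$, and $\mathcal L(p)\to\infty$ as $p\to\infty$. A Stieltjes function is $\varphi(\lambda)=a/\lambda+b+\int_{[0,\infty)}\frac{\sigma(dt)}{\lambda+t}$ with $a,b\ge0$ and $\sigma$ a Borel measure on $[0,\infty)$ with $\int(1+t)^{-1}\sigma(dt)<\infty$. Under these assumptions $\mathcal L(p)=\int_{[0,\infty)}\frac{p}{p+t}\sigma(dt)$ for such a measure, and $\mathcal L$ is a strictly increasing bijection of $(0,\infty)$ onto itself. *)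

theory Defs
  imports "HOL-Analysis.Analysis"
begin

definition stieltjes_function :: "(real \<Rightarrow> real) \<Rightarrow> bool" where
  "stieltjes_function \<phi> \<longleftrightarrow>
     (\<exists>a b (\<sigma> :: real measure).
        a \<ge> 0 \<and> b \<ge> 0 \<and> sets \<sigma> = sets borel \<and> emeasure \<sigma> {..<0} = 0 \<and>
        integrable \<sigma> (\<lambda>t. 1 / (1 + t)) \<and>
        (\<forall>l>0. \<phi> l = a / l + b + (\<integral>t. 1 / (l + t) \<partial>\<sigma>)))"

definition laplace :: "(real \<Rightarrow> real) \<Rightarrow> real \<Rightarrow> real" where
  "laplace k p = (LINT t:{0<..}|lborel. exp (- p * t) * k t)"

end

theory Submission
  imports Defs
begin

lemma int_shift:
  fixes \<sigma> :: "real measure"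
  assumes s: "sets \<sigma> = sets borel" and n: "emeasure \<sigma> {..<0} = 0"
    and i: "integrable \<sigma> (\<lambda>t. 1/(1+t))" and l: "l > 0"
  shows "integrable \<sigma> (\<lambda>t. 1/(l+t))"
proof -
  define c where "c = max 1 (1/l)"
  have ae: "AE t in \<sigma>. t \<ge> 0"
    by (rule AE_I'[of "{..<0}"]) (auto simp: null_sets_def n s sets_eq_imp_space_eq[OF s])
  show ?thesis
  proof (rule Bochner_Integration.integrable_bound[OF integrable_mult_right[OF i, of c]])
    show "(\<lambda>t. 1/(l+t)) \<in> borel_measurable \<sigma>"
      unfolding measurable_cong_sets[OF s refl] by measurable
    show "AE t in \<sigma>. norm (1/(l+t)) \<le> norm (c * (1/(1+t)))"
      using ae
    proof eventually_elim
      case (elim t)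
      have c1: "c \<ge> 1" and cl: "c * l \<ge> 1" using l unfolding c_def
        by (auto simp: field_simps max_def)
      have "1 * t \<le> c * t" using c1 elim by (rule mult_right_mono)
      hence "1 * (1+t) \<le> c * (l + t)" using cl by (simp add: distrib_left)
      then show ?case using elim l c1
        by (auto simp: field_simps)
    qed
  qed
qed

lemma L_props:
  fixes \<phi> :: "real \<Rightarrow> real"
  assumes st: "stieltjes_function \<phi>" and lim0: "filterlim \<phi> at_top (at_right 0)"
  shows "\<forall>p q. 0 < p \<and> p \<le> q \<longrightarrow> p * \<phi> p \<le> q * \<phi> q"
    and "\<forall>p q. 0 < p \<and> 0 < q \<longrightarrow> (p+q) * \<phi> (p+q) < p * \<phi> p + q * \<phi> q"
proof -
  obtain a b and \<sigma> :: "real measure" where a: "a \<ge> 0" and b: "b \<ge> 0"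
    and s: "sets \<sigma> = sets borel" and n: "emeasure \<sigma> {..<0} = 0"
    and i: "integrable \<sigma> (\<lambda>t. 1 / (1 + t))"
    and rep: "\<And>l. l > 0 \<Longrightarrow> \<phi> l = a / l + b + (\<integral>t. 1 / (l + t) \<partial>\<sigma>)"
    proof -
    from st obtain a b and \<sigma> :: "real measure" where "a \<ge> 0 \<and> b \<ge> 0 \<and> sets \<sigma> = sets borel \<and> emeasure \<sigma> {..<0} = 0 \<and>
        integrable \<sigma> (\<lambda>t. 1 / (1 + t)) \<and>
        (\<forall>l>0. \<phi> l = a / l + b + (\<integral>t. 1 / (l + t) \<partial>\<sigma>))"
      unfolding stieltjes_function_def by blast
    then show ?thesis using that by blast
  qed
  have ae: "AE t in \<sigma>. t \<ge> 0"
    by (rule AE_I'[of "{..<0}"]) (auto simp: null_sets_def n s sets_eq_imp_space_eq[OF s])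
  have int: "\<And>l. l > 0 \<Longrightarrow> integrable \<sigma> (\<lambda>t. 1/(l+t))"
    using int_shift[OF s n i] by blast
  have intp: "\<And>l. l > 0 \<Longrightarrow> integrable \<sigma> (\<lambda>t. l * (1/(l+t)))"
    by (rule integrable_mult_right) (rule int)
  have meas: "\<And>l. (\<lambda>t. 1/(l+t)) \<in> borel_measurable \<sigma>"
    unfolding measurable_cong_sets[OF s refl] by measurable
  define G where "G l = (\<integral>t. l * (1/(l+t)) \<partial>\<sigma>)" for l
  have Lrep: "\<And>p. p > 0 \<Longrightarrow> p * \<phi> p = a + b * p + G p"
  proof -
    fix p :: real assume p: "p > 0"
    have "G p = p * (\<integral>t. 1/(p+t) \<partial>\<sigma>)" unfolding G_def by (rule integral_mult_right_zero)
    then show "p * \<phi> p = a + b * p + G p" using rep[OF p] p by (simp add: distrib_left)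
  qed
  show "\<forall>p q. 0 < p \<and> p \<le> q \<longrightarrow> p * \<phi> p \<le> q * \<phi> q"
  proof (intro allI impI)
    fix p q :: real assume pq: "0 < p \<and> p \<le> q"
    have "G p \<le> G q" unfolding G_def
    proof (rule integral_mono_AE[OF intp intp])
      show "0 < p" "0 < q" using pq by auto
      show "AE t in \<sigma>. p * (1 / (p + t)) \<le> q * (1 / (q + t))"
        using ae
      proof eventually_elim
        case (elim t)
        have "p * t \<le> q * t" using pq elim by (intro mult_right_mono) auto
        hence "p * (q + t) \<le> q * (p + t)" by (simp add: algebra_simps)
        thus ?case using pq elim by (simp add: divide_simps)
      qed
    qed
    moreover have "b * p \<le> b * q" using b pq by (intro mult_left_mono) auto
    ultimately show "p * \<phi> p \<le> q * \<phi> q" using Lrep pq by force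
  qed
  show "\<forall>p q. 0 < p \<and> 0 < q \<longrightarrow> (p+q) * \<phi> (p+q) < p * \<phi> p + q * \<phi> q"
  proof (intro allI impI)
    fix p q :: real assume pq: "0 < p \<and> 0 < q"
    define f where "f t = p * (1/(p+t)) + q * (1/(q+t)) - (p+q) * (1/(p+q+t))" for t
    have fint: "integrable \<sigma> f" unfolding f_def
      using pq by (intro Bochner_Integration.integrable_diff Bochner_Integration.integrable_add intp) auto
    have fG: "G p + G q - G (p+q) = (\<integral>t. f t \<partial>\<sigma>)"
    proof -
      have ip: "integrable \<sigma> (\<lambda>t. p * (1/(p+t)))" using pq by (intro intp) auto
      have iq: "integrable \<sigma> (\<lambda>t. q * (1/(q+t)))" using pq by (intro intp) auto
      have ipq: "integrable \<sigma> (\<lambda>t. (p+q) * (1/(p+q+t)))" using pq by (intro intp) auto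
      have e1: "(\<integral>t. f t \<partial>\<sigma>) = (\<integral>t. p * (1/(p+t)) + q * (1/(q+t)) \<partial>\<sigma>) - G (p+q)"
        unfolding f_def G_def
        by (rule Bochner_Integration.integral_diff[OF Bochner_Integration.integrable_add[OF ip iq] ipq])
      have e2: "(\<integral>t. p * (1/(p+t)) + q * (1/(q+t)) \<partial>\<sigma>) = G p + G q"
        unfolding G_def by (rule Bochner_Integration.integral_add[OF ip iq])
      show ?thesis using e1 e2 by linarith
    qed
    have fpos: "AE t in \<sigma>. f t > 0"
      using ae
    proof eventually_elim
      case (elim t)
      have 1: "p * (1/(p+t)) > p * (1/(p+q+t))" using pq elim by (simp add: divide_simps)
      have 2: "q * (1/(q+t)) > q * (1/(p+q+t))" using pq elim by (simp add: divide_simps)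
      have "(p+q) * (1/(p+q+t)) = p * (1/(p+q+t)) + q * (1/(p+q+t))" by (rule distrib_right)
      thus ?case using 1 2 unfolding f_def by linarith
    qed
    have fnn: "(\<integral>t. f t \<partial>\<sigma>) \<ge> 0"
      by (rule integral_nonneg_AE) (use fpos in \<open>auto elim: eventually_mono\<close>)
    show "(p+q) * \<phi> (p+q) < p * \<phi> p + q * \<phi> q"
    proof (cases "a > 0 \<or> (\<integral>t. f t \<partial>\<sigma>) > 0")
      case True
      then show ?thesis using Lrep[of p] Lrep[of q] Lrep[of "p+q"] pq fG fnn a
        by (auto simp: algebra_simps)
    next
      case False
      hence a0: "a = 0" and f0: "(\<integral>t. f t \<partial>\<sigma>) = 0" using a fnn by auto
      have fnn0: "AE t in \<sigma>. 0 \<le> f t" using fpos by eventually_elim auto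
      have "AE t in \<sigma>. f t = 0"
        using integral_nonneg_eq_0_iff_AE[OF fint fnn0] f0 by simp
      with fpos have aeF: "AE t in \<sigma>. False" by eventually_elim auto
      have z: "\<And>l. (\<integral>t. 1 / (l + t) \<partial>\<sigma>) = (\<integral>t. 0 \<partial>\<sigma>)"
        by (rule integral_cong_AE[OF meas]) (use aeF in \<open>auto elim: eventually_mono\<close>)
      have ev: "eventually (\<lambda>l. \<phi> l = b) (at_right (0::real))"
        using eventually_at_right_less[of 0] by eventually_elim (use rep a0 z in auto)
      have "filterlim (\<lambda>_. b) at_top (at_right (0::real))"
        using filterlim_cong[OF refl refl ev] lim0 by simp
      hence "eventually (\<lambda>_. b + 1 \<le> b) (at_right (0::real))"
        by (simp add: filterlim_at_top)
      hence "at_right (0::real) = bot" by (simp add: eventually_False)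
      thus ?thesis by simp
    qed
  qed
qed

lemma sum_superadd:
  fixes p0 :: "real \<Rightarrow> real" and x :: "nat \<Rightarrow> real"
  assumes sa: "\<forall>x>0. \<forall>y>0. p0 (x + y) > p0 x + p0 y"
    and r: "r \<ge> 2" and pos: "\<forall>j\<in>{1..r}. x j > 0"
  shows "p0 (\<Sum>j=1..r. x j) > (\<Sum>j=1..r. p0 (x j))"
  using r pos
proof (induction r rule: dec_induct)
  case base
  have "{1..2::nat} = {1,2}" by auto
  then show ?case using base sa by simp
next
  case (step n)
  have S: "\<And>g::nat\<Rightarrow>real. (\<Sum>j=1..Suc n. g j) = (\<Sum>j=1..n. g j) + g (Suc n)"
    by (simp add: sum.cl_ivl_Suc)
  have pn: "\<forall>j\<in>{1..n}. x j > 0" using step.prems by auto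
  have ih: "p0 (\<Sum>j=1..n. x j) > (\<Sum>j=1..n. p0 (x j))" using step.IH pn by blast
  have xs: "x (Suc n) > 0" using step.prems by auto
  have sp: "(\<Sum>j=1..n. x j) > 0"
    using step.hyps pn by (intro sum_pos) auto
  have "p0 ((\<Sum>j=1..n. x j) + x (Suc n)) > p0 (\<Sum>j=1..n. x j) + p0 (x (Suc n))"
    using sa sp xs by blast
  moreover have "p0 (\<Sum>j=1..Suc n. x j) = p0 ((\<Sum>j=1..n. x j) + x (Suc n))"
    using S[of x] by simp
  ultimately show ?case using ih S[of "\<lambda>j. p0 (x j)"] by linarith
qed

theorem lemma4p1:
  fixes k :: "real \<Rightarrow> real" and p0 :: "real \<Rightarrow> real"
  assumes k_nonneg: "\<forall>t>0. k t \<ge> 0"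
    and k_locint: "\<forall>a b. 0 < a \<and> a \<le> b \<longrightarrow> set_integrable lborel {a..b} k"
    and laplace_finite: "\<forall>p>0. set_integrable lborel {0<..} (\<lambda>t. exp (- p * t) * k t)"
    and stieltjes: "stieltjes_function (laplace k)"
    and K_at_0: "filterlim (laplace k) at_top (at_right 0)"
    and K_at_top: "(laplace k \<longlongrightarrow> 0) at_top"
    and L_at_0: "((\<lambda>p. p * laplace k p) \<longlongrightarrow> 0) (at_right 0)"
    and L_at_top: "filterlim (\<lambda>p. p * laplace k p) at_top at_top"
    and p0_inv: "\<forall>z>0. p0 z > 0 \<and> p0 z * laplace k (p0 z) = z"
  shows "(\<forall>x>0. \<forall>y>0. p0 (x + y) > p0 x + p0 y) \<and>
         (\<forall>\<beta>>0. \<forall>r::nat. \<forall>m::nat \<Rightarrow> nat.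
            r \<ge> 2 \<and> (\<forall>j\<in>{1..r}. m j \<ge> 1) \<longrightarrow>
            p0 (real (\<Sum>j=1..r. m j) * \<beta>) > (\<Sum>j=1..r. p0 (real (m j) * \<beta>)))"
proof -
  note mono = L_props(1)[OF stieltjes K_at_0]
  note sub = L_props(2)[OF stieltjes K_at_0]
  have sa: "\<forall>x>0. \<forall>y>0. p0 (x + y) > p0 x + p0 y"
  proof (intro allI impI)
    fix x y :: real assume x: "x > 0" and y: "y > 0"
    define p q r where "p = p0 x" and "q = p0 y" and "r = p0 (x + y)"
    have p: "p > 0" "p * laplace k p = x" using p0_inv x unfolding p_def by auto
    have q: "q > 0" "q * laplace k q = y" using p0_inv y unfolding q_def by auto
    have r: "r > 0" "r * laplace k r = x + y" using p0_inv x y unfolding r_def by auto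
    have lt: "(p+q) * laplace k (p+q) < x + y" using sub p q by auto
    show "p0 (x + y) > p0 x + p0 y"
    proof (rule ccontr)
      assume "\<not> p0 (x + y) > p0 x + p0 y"
      hence "r \<le> p + q" unfolding p_def q_def r_def by simp
      hence "r * laplace k r \<le> (p+q) * laplace k (p+q)" using mono r(1) by blast
      thus False using lt r(2) by linarith
    qed
  qed
  moreover have "\<forall>\<beta>>0. \<forall>r::nat. \<forall>m::nat \<Rightarrow> nat.
            r \<ge> 2 \<and> (\<forall>j\<in>{1..r}. m j \<ge> 1) \<longrightarrow>
            p0 (real (\<Sum>j=1..r. m j) * \<beta>) > (\<Sum>j=1..r. p0 (real (m j) * \<beta>))"
  proof (intro allI impI)
    fix \<beta> :: real and r :: nat and m :: "nat \<Rightarrow> nat"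
    assume b: "\<beta> > 0" and h: "r \<ge> 2 \<and> (\<forall>j\<in>{1..r}. m j \<ge> 1)"
    have pos: "\<forall>j\<in>{1..r}. real (m j) * \<beta> > 0" using h b by auto
    have eq: "real (\<Sum>j=1..r. m j) * \<beta> = (\<Sum>j=1..r. real (m j) * \<beta>)"
      by (simp add: sum_distrib_right)
    show "p0 (real (\<Sum>j=1..r. m j) * \<beta>) > (\<Sum>j=1..r. p0 (real (m j) * \<beta>))"
      unfolding eq using sum_superadd[OF sa _ pos] h by blast
  qed
  ultimately show ?thesis by blast
qed

end
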